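(* Consider Algorithm 1 (delay-tolerant integer flow balancing, described in the context) run on a strongly connected digraph $\mathcal{G}_d$ with edge bounds $l_{ji},u_{ji}$, under any realization of transmission delays bounded by $\overline{\tau}<\infty$. Let $\mathcal{V}^-[k]=\{v_j\in\mathcal{V}: b_j[k]<0\}$. Then for every $k\ge 0$, $\mathcal{V}^-[k+1]\subseteq\mathcal{V}^-[k]$.
   Context: Setting: $\mathcal{G}_d=(\mathcal{V},\mathcal{E})$ is a strongly connected digraph, $\mathcal{V}=\{v_1,\dots,v_n\}$, $n\ge2$; an edge $(v_j,v_i)$ carries flow from $v_i$ to $v_j$. $\mathcal{N}_j^-=\{v_i:(v_j,v_i)\in\mathcal{E}\}$, $\mathcal{N}_j^+=\{v_l:(v_l,v_j)\in\mathcal{E}\}$, $\mathcal{D}_j=|\mathcal{N}_j^-|+|\mathcal{N}_j^+|$. Each edge has real bounds $1\le l_{ji}\le u_{ji}$. Communication is bidirectional along every edge. Projection: $[x]_{ji}=\max\{\lceil l_{ji}\rceil,\min\{\lfloor u_{ji}\rfloor,x\}\}$. State: for each edge $(v_l,v_j)$, the tail $v_j$ holds the actual flow $f_{lj}[k]$; for each edge $(v_j,v_i)$, the head $v_j$ holds a perceived flow $f^{(p)}_{ji}[k]$. Actual balance $b_j[k]=\sum_{v_i\in\mathcal{N}_j^-}f_{ji}[k]-\sum_{v_l\in\mathcal{N}_j^+}f_{lj}[k]$; perceived balance $b^{(p)}_j[k]=\sum_{v_i\in\mathcal{N}_j^-}f^{(p)}_{ji}[k]-\sum_{v_l\in\mathcal{N}_j^+}f_{lj}[k]$;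 total imbalance $\varepsilon[k]=\sum_j|b_j[k]|$. Algorithm 1. Initialization: $f_{ji}[0]=f^{(p)}_{ji}[0]=\lceil l_{ji}\rceil$ for all edges; each $v_j$ fixes a cyclic order of its $\mathcal{D}_j$ incident (incoming and outgoing) edges and a pointer into it. Iteration $k=0,1,2,\dots$, at each node $v_j$: (1) compute $b^{(p)}_j[k]$. (2) If $b^{(p)}_j[k]>0$, starting at the pointer and cycling through the order, visit edges one at a time: at an outgoing edge $(v_l,v_j)$, if $f_{lj}[k]+c^{(j)}_{lj}[k]<\lfloor u_{lj}\rfloor$ add $1$ to $c^{(j)}_{lj}[k]$; at an incoming edge $(v_j,v_i)$, if $f^{(p)}_{ji}[k]+c^{(j)}_{ji}[k]>\lceil l_{ji}\rceil$ subtract $1$ from $c^{(j)}_{ji}[k]$ (the $c$'s start at $0$; edges at their limit are skipped); stop as soon as the total number of unit changes equals $b^{(p)}_j[k]$, leaving the pointer at the next edge. If $b^{(p)}_j[k]\le 0$, all $c^{(j)}[k]=0$. (3) $v_j$ transmits $c^{(j)}_{lj}[k]$ to each out-neighbor $v_l$ and $c^{(j)}_{ji}[k]$ to each in-neighbor $v_i$. A message sent at step $k$ over a link in a given direction is delivered at step $k+\tau$, where the integer $\tau\in[0,\overline{\tau}]$ is arbitrary (unknown, time-varying, independent across links and directions). (4) $v_j$ forms $\overline{c}^{(l)}_{lj}[k]$ (resp. $\overline{c}^{(i)}_{ji}[k]$) as the sum of all values $c^{(l)}_{lj}[k_0]$ (resp. $c^{(i)}_{ji}[k_0]$) sent by $v_l$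 (resp. $v_i$) that are delivered at step $k$ (zero if none). (5)–(6) $f_{lj}[k+1]=[f_{lj}[k]+c^{(j)}_{lj}[k]+\overline{c}^{(l)}_{lj}[k]]_{lj}$ and $f^{(p)}_{ji}[k+1]=[f^{(p)}_{ji}[k]+c^{(j)}_{ji}[k]+\overline{c}^{(i)}_{ji}[k]]_{ji}$. *)

theory Defs
  imports Complex_Main
begin

text \<open>Edges are pairs (a,b) meaning flow from b to a: the tail b holds the actual
flow, the head a holds the perceived flow.\<close>

definition proj :: "real \<Rightarrow> real \<Rightarrow> int \<Rightarrow> int" where
  "proj lo hi x = max (ceiling lo) (min (floor hi) x)"

text \<open>Outgoing edge (snd e = j): increase actual flow, must stay below floor u.
Incoming edge (fst e = j): decrease perceived flow, must stay above ceiling l.\<close>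
definition cap_ok :: "'v \<Rightarrow> ('v \<times> 'v \<Rightarrow> real) \<Rightarrow> ('v \<times> 'v \<Rightarrow> real)
    \<Rightarrow> ('v \<times> 'v \<Rightarrow> int) \<Rightarrow> ('v \<times> 'v \<Rightarrow> int) \<Rightarrow> ('v \<times> 'v \<Rightarrow> int) \<Rightarrow> 'v \<times> 'v \<Rightarrow> bool" where
  "cap_ok j l u f fp cc e =
     (if snd e = j then f e + cc e < floor (u e) else fp e + cc e > ceiling (l e))"

text \<open>One visit of the cyclic procedure; state = (pointer, tentative changes, remaining units).
Once no units remain (or no edge can change) the state is frozen.\<close>
definition visit :: "'v \<Rightarrow> ('v \<times> 'v) list \<Rightarrow> ('v \<times> 'v \<Rightarrow> real) \<Rightarrow> ('v \<times> 'v \<Rightarrow> real)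
    \<Rightarrow> ('v \<times> 'v \<Rightarrow> int) \<Rightarrow> ('v \<times> 'v \<Rightarrow> int)
    \<Rightarrow> nat \<times> ('v \<times> 'v \<Rightarrow> int) \<times> int \<Rightarrow> nat \<times> ('v \<times> 'v \<Rightarrow> int) \<times> int" where
  "visit j os l u f fp st =
     (case st of (pos, cc, r) \<Rightarrow>
       if r \<le> 0 \<or> (\<forall>e\<in>set os. \<not> cap_ok j l u f fp cc e) then (pos, cc, r)
       else (let e = os ! pos in
             if cap_ok j l u f fp cc e
             then (Suc pos mod length os,
                   cc(e := cc e + (if snd e = j then 1 else -1)), r - 1)
             else (Suc pos mod length os, cc, r)))"

text \<open>Step (2) of Algorithm 1 at node j: starting from pointer p with b = perceived balance,
returns the new pointer and the changes c^(j). Enough visits are made for the procedure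
to terminate (each round of |os| visits performs at least one unit change or freezes).\<close>
definition alloc :: "'v \<Rightarrow> ('v \<times> 'v) list \<Rightarrow> ('v \<times> 'v \<Rightarrow> real) \<Rightarrow> ('v \<times> 'v \<Rightarrow> real)
    \<Rightarrow> ('v \<times> 'v \<Rightarrow> int) \<Rightarrow> ('v \<times> 'v \<Rightarrow> int) \<Rightarrow> nat \<Rightarrow> int \<Rightarrow> nat \<times> ('v \<times> 'v \<Rightarrow> int)" where
  "alloc j os l u f fp p b =
     (case (visit j os l u f fp ^^ (length os * (nat b + 1))) (p, (\<lambda>_. 0), b) of
        (pos, cc, _) \<Rightarrow> (pos, cc))"

definition balance :: "('v \<times> 'v) set \<Rightarrow> ('v \<times> 'v \<Rightarrow> int) \<Rightarrow> 'v \<Rightarrow> int" where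
  "balance E f j = (\<Sum>e\<in>{e\<in>E. fst e = j}. f e) - (\<Sum>e\<in>{e\<in>E. snd e = j}. f e)"

definition pbalance :: "('v \<times> 'v) set \<Rightarrow> ('v \<times> 'v \<Rightarrow> int) \<Rightarrow> ('v \<times> 'v \<Rightarrow> int) \<Rightarrow> 'v \<Rightarrow> int" where
  "pbalance E f fp j = (\<Sum>e\<in>{e\<in>E. fst e = j}. fp e) - (\<Sum>e\<in>{e\<in>E. snd e = j}. f e)"

definition delivered :: "(nat \<Rightarrow> int) \<Rightarrow> (nat \<Rightarrow> nat) \<Rightarrow> nat \<Rightarrow> int" where
  "delivered msg d k = (\<Sum>k0\<in>{k0\<in>{..k}. k0 + d k0 = k}. msg k0)"

end

theory Submission
  imports Defs
begin


lemma sum_upd_abs: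
  fixes cc :: "'a \<Rightarrow> int"
  assumes "finite A" "x \<in> A"
  shows "(\<Sum>e\<in>A. \<bar>(cc(x := v)) e\<bar>) = (\<Sum>e\<in>A. \<bar>cc e\<bar>) - \<bar>cc x\<bar> + \<bar>v\<bar>"
proof -
  have "(\<Sum>e\<in>A. \<bar>(cc(x := v)) e\<bar>) = \<bar>v\<bar> + (\<Sum>e\<in>A - {x}. \<bar>(cc(x := v)) e\<bar>)"
    using sum.remove[OF assms, of "\<lambda>e. \<bar>(cc(x := v)) e\<bar>"] by simp
  also have "(\<Sum>e\<in>A - {x}. \<bar>(cc(x := v)) e\<bar>) = (\<Sum>e\<in>A - {x}. \<bar>cc e\<bar>)"
    by (rule sum.cong) auto
  also have "\<dots> = (\<Sum>e\<in>A. \<bar>cc e\<bar>) - \<bar>cc x\<bar>"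
    using sum.remove[OF assms, of "\<lambda>e. \<bar>cc e\<bar>"] by simp
  finally show ?thesis by simp
qed

definition ainv where
  "ainv j os l u f fp b st = (case st of (pos, cc, r) \<Rightarrow>
     pos < length os \<and> (\<forall>e. e \<notin> set os \<longrightarrow> cc e = 0) \<and>
     (\<forall>e. snd e = j \<longrightarrow> 0 \<le> cc e \<and> (cc e = 0 \<or> f e + cc e \<le> floor (u e))) \<and>
     (\<forall>e. snd e \<noteq> j \<longrightarrow> cc e \<le> 0 \<and> (cc e = 0 \<or> ceiling (l e) \<le> fp e + cc e)) \<and>
     (\<Sum>e\<in>set os. \<bar>cc e\<bar>) = b - r \<and> (0 \<le> r \<or> (\<Sum>e\<in>set os. \<bar>cc e\<bar>) = 0))"

lemma visit_inv:
  fixes j :: 'v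
  assumes "ainv j os l u f fp b st"
  shows "ainv j os l u f fp b (visit j os l u f fp st)"
proof -
  obtain pos cc r where st: "st = (pos, cc, r)" by (cases st) auto
  show ?thesis
  proof (cases "r \<le> 0 \<or> (\<forall>e\<in>set os. \<not> cap_ok j l u f fp cc e)")
    case True
    then show ?thesis using assms by (simp add: visit_def st)
  next
    case False
    then have r: "r > 0" and ne: "os \<noteq> []" by auto
    have I: "pos < length os" "\<forall>e. e \<notin> set os \<longrightarrow> cc e = 0"
      "\<forall>e. snd e = j \<longrightarrow> 0 \<le> cc e \<and> (cc e = 0 \<or> f e + cc e \<le> floor (u e))"
      "\<forall>e. snd e \<noteq> j \<longrightarrow> cc e \<le> 0 \<and> (cc e = 0 \<or> ceiling (l e) \<le> fp e + cc e)"
      "(\<Sum>e\<in>set os. \<bar>cc e\<bar>) = b - r"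
      using assms r by (auto simp: ainv_def st)
    define e where "e = os ! pos"
    have eos: "e \<in> set os" using I(1) by (simp add: e_def)
    have pos': "Suc pos mod length os < length os" using ne by simp
    show ?thesis
    proof (cases "cap_ok j l u f fp cc e")
      case cap: True
      define v where "v = cc e + (if snd e = j then 1 else -1)"
      have av: "\<bar>v\<bar> = \<bar>cc e\<bar> + 1"
      proof (cases "snd e = j")
        case True then have "cc e \<ge> 0" using I(3) by blast
        then show ?thesis using True by (simp add: v_def)
      next
        case False then have "cc e \<le> 0" using I(4) by blast
        then show ?thesis using False by (simp add: v_def)
      qed
      have sum: "(\<Sum>x\<in>set os. \<bar>(cc(e := v)) x\<bar>) = b - (r - 1)"
        using sum_upd_abs[of "set os" e cc v] eos I(5) av by simp
      have visit: "visit j os l u f fp st = (Suc pos mod length os, cc(e := v), r - 1)"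
        using False cap by (simp add: visit_def st e_def v_def Let_def)
      have A3: "\<forall>x. snd x = j \<longrightarrow> 0 \<le> (cc(e := v)) x \<and> ((cc(e := v)) x = 0 \<or> f x + (cc(e := v)) x \<le> floor (u x))"
      proof (intro allI impI)
        fix x :: "'v \<times> 'v" assume "snd x = j"
        then show "0 \<le> (cc(e := v)) x \<and> ((cc(e := v)) x = 0 \<or> f x + (cc(e := v)) x \<le> floor (u x))"
          using spec[OF I(3), of x] spec[OF I(3), of e] cap by (cases "x = e") (auto simp: v_def cap_ok_def)
      qed
      have A4: "\<forall>x. snd x \<noteq> j \<longrightarrow> (cc(e := v)) x \<le> 0 \<and> ((cc(e := v)) x = 0 \<or> ceiling (l x) \<le> fp x + (cc(e := v)) x)"
      proof (intro allI impI)
        fix x :: "'v \<times> 'v" assume "snd x \<noteq> j"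
        then show "(cc(e := v)) x \<le> 0 \<and> ((cc(e := v)) x = 0 \<or> ceiling (l x) \<le> fp x + (cc(e := v)) x)"
          using spec[OF I(4), of x] spec[OF I(4), of e] cap by (cases "x = e") (auto simp: v_def cap_ok_def)
      qed
      show ?thesis unfolding visit ainv_def prod.case
        using A3 A4 pos' sum r I(2) eos by (auto simp del: split_paired_All)
    next
      case cap: False
      have visit: "visit j os l u f fp st = (Suc pos mod length os, cc, r)"
        using False cap unfolding visit_def st e_def Let_def prod.case by (simp only: if_False if_True)
      show ?thesis unfolding visit ainv_def using pos' I r by auto
    qed
  qed
qed

lemma funpow_inv:
  assumes "ainv j os l u f fp b st"
  shows "ainv j os l u f fp b ((visit j os l u f fp ^^ n) st)"
  using assms by (induction n) (auto intro: visit_inv)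

lemma alloc_props:
  assumes "p < length os" and "alloc j os l u f fp p b = (p', cc)"
  shows "p' < length os" "\<forall>e. e \<notin> set os \<longrightarrow> cc e = 0"
    "\<forall>e. snd e = j \<longrightarrow> 0 \<le> cc e \<and> (cc e = 0 \<or> f e + cc e \<le> floor (u e))"
    "\<forall>e. snd e \<noteq> j \<longrightarrow> cc e \<le> 0 \<and> (cc e = 0 \<or> ceiling (l e) \<le> fp e + cc e)"
    "(\<Sum>e\<in>set os. \<bar>cc e\<bar>) \<le> max b 0"
proof -
  have "ainv j os l u f fp b (p, (\<lambda>_. 0), b)" using assms(1) by (simp add: ainv_def)
  then have "ainv j os l u f fp b ((visit j os l u f fp ^^ (length os * (nat b + 1))) (p, (\<lambda>_. 0), b))"
    by (rule funpow_inv)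
  moreover obtain r where "(visit j os l u f fp ^^ (length os * (nat b + 1))) (p, (\<lambda>_. 0), b) = (p', cc, r)"
    using assms(2) unfolding alloc_def by (auto split: prod.splits)
  ultimately have "ainv j os l u f fp b (p', cc, r)" by simp
  then show "p' < length os" "\<forall>e. e \<notin> set os \<longrightarrow> cc e = 0"
    "\<forall>e. snd e = j \<longrightarrow> 0 \<le> cc e \<and> (cc e = 0 \<or> f e + cc e \<le> floor (u e))"
    "\<forall>e. snd e \<noteq> j \<longrightarrow> cc e \<le> 0 \<and> (cc e = 0 \<or> ceiling (l e) \<le> fp e + cc e)"
    "(\<Sum>e\<in>set os. \<bar>cc e\<bar>) \<le> max b 0"
    unfolding ainv_def by auto
qed



lemma pend_step:
  fixes g :: "nat \<Rightarrow> int"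
  shows "(\<Sum>k0\<in>{k0. k0 < Suc k \<and> Suc k \<le> k0 + d k0}. g k0) + delivered g d k
       = (\<Sum>k0\<in>{k0. k0 < k \<and> k \<le> k0 + d k0}. g k0) + g k"
proof -
  have e1: "{k0. k0 < Suc k \<and> Suc k \<le> k0 + d k0} = {k0\<in>{..k}. Suc k \<le> k0 + d k0}" by auto
  have e2: "{k0. k0 < k \<and> k \<le> k0 + d k0} = {k0\<in>{..k}. k0 < k \<and> k \<le> k0 + d k0}" by auto
  have "(\<Sum>k0\<in>{k0. k0 < Suc k \<and> Suc k \<le> k0 + d k0}. g k0) + delivered g d k
      = (\<Sum>k0\<in>{..k}. (if Suc k \<le> k0 + d k0 then g k0 else 0) + (if k0 + d k0 = k then g k0 else 0))"
    unfolding e1 delivered_def sum.distrib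
    by (simp only: sum.inter_filter[OF finite_atMost])
  also have "\<dots> = (\<Sum>k0\<in>{..k}. (if k0 < k \<and> k \<le> k0 + d k0 then g k0 else 0) + (if k0 = k then g k0 else 0))"
    by (rule sum.cong) auto
  also have "\<dots> = (\<Sum>k0\<in>{k0. k0 < k \<and> k \<le> k0 + d k0}. g k0) + g k"
    unfolding e2 sum.distrib by (simp only: sum.inter_filter[OF finite_atMost]) (simp add: sum.delta)
  finally show ?thesis .
qed

lemma proj_id:
  assumes "ceiling lo \<le> x" "x \<le> max (ceiling lo) (floor hi)"
  shows "proj lo hi x = x"
  using assms unfolding proj_def by auto



theorem proposition2:
  fixes V :: "'v set" and E :: "('v \<times> 'v) set"
    and l u :: "'v \<times> 'v \<Rightarrow> real"
    and ord :: "'v \<Rightarrow> ('v \<times> 'v) list"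
    and taubar :: nat
    and dH dT :: "'v \<times> 'v \<Rightarrow> nat \<Rightarrow> nat"
    and f fp :: "nat \<Rightarrow> 'v \<times> 'v \<Rightarrow> int"
    and ptr :: "nat \<Rightarrow> 'v \<Rightarrow> nat"
    and c :: "nat \<Rightarrow> 'v \<Rightarrow> 'v \<times> 'v \<Rightarrow> int"
  assumes finV: "finite V" and card: "card V \<ge> 2"
    and EV: "E \<subseteq> V \<times> V" and noloop: "\<forall>v. (v, v) \<notin> E"
    and strong: "\<forall>x\<in>V. \<forall>y\<in>V. (x, y) \<in> E\<^sup>*"
    and bounds: "\<forall>e\<in>E. 1 \<le> l e \<and> l e \<le> u e"
    and ord_ok: "\<forall>j\<in>V. distinct (ord j) \<and> set (ord j) = {e\<in>E. fst e = j \<or> snd e = j}"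
    and ptr0: "\<forall>j\<in>V. ptr 0 j < length (ord j)"
    and delays: "\<forall>e\<in>E. \<forall>k. dH e k \<le> taubar \<and> dT e k \<le> taubar"
    and init: "\<forall>e\<in>E. f 0 e = ceiling (l e) \<and> fp 0 e = ceiling (l e)"
    and step_alloc: "\<forall>k. \<forall>j\<in>V. (ptr (Suc k) j, c k j) =
        alloc j (ord j) l u (f k) (fp k) (ptr k j) (pbalance E (f k) (fp k) j)"
    and step_f: "\<forall>k. \<forall>e\<in>E. f (Suc k) e =
        proj (l e) (u e) (f k e + c k (snd e) e + delivered (\<lambda>k0. c k0 (fst e) e) (dH e) k)"
    and step_fp: "\<forall>k. \<forall>e\<in>E. fp (Suc k) e =
        proj (l e) (u e) (fp k e + c k (fst e) e + delivered (\<lambda>k0. c k0 (snd e) e) (dT e) k)"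
  shows "\<forall>k. {j\<in>V. balance E (f (Suc k)) j < 0} \<subseteq> {j\<in>V. balance E (f k) j < 0}"
proof -
  have finE: "finite E" using finV EV finite_subset by blast
  have sideV: "\<And>e. e \<in> E \<Longrightarrow> fst e \<in> V \<and> snd e \<in> V" using EV by auto
  have ptrI: "\<forall>j\<in>V. ptr k j < length (ord j)" for k
  proof (induction k)
    case 0 then show ?case using ptr0 by simp
  next
    case (Suc k)
    show ?case
    proof
      fix j assume j: "j \<in> V"
      show "ptr (Suc k) j < length (ord j)"
        using alloc_props(1)[OF Suc[rule_format, OF j] step_alloc[rule_format, OF j, symmetric]] .
    qed
  qed
  have AP: "(\<forall>e. e \<notin> set (ord j) \<longrightarrow> c k j e = 0) \<and>
     (\<forall>e. snd e = j \<longrightarrow> 0 \<le> c k j e \<and> (c k j e = 0 \<or> f k e + c k j e \<le> floor (u e))) \<and>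
     (\<forall>e. snd e \<noteq> j \<longrightarrow> c k j e \<le> 0 \<and> (c k j e = 0 \<or> ceiling (l e) \<le> fp k e + c k j e)) \<and>
     (\<Sum>e\<in>set (ord j). \<bar>c k j e\<bar>) \<le> max (pbalance E (f k) (fp k) j) 0" if j: "j \<in> V" for k j
    using alloc_props(2-5)[OF ptrI[rule_format, OF j] step_alloc[rule_format, OF j, symmetric]]
    by blast
  have ct_nn: "0 \<le> c k (snd e) e" if "e \<in> E" for k e
    using AP[OF conjunct2[OF sideV[OF that]], of k] by blast
  have ch_np: "c k (fst e) e \<le> 0" if "e \<in> E" for k e
  proof -
    have "snd e \<noteq> fst e" using noloop that by (cases e) auto
    then show ?thesis using AP[OF conjunct1[OF sideV[OF that]], of k] by blast
  qed
  define Pd where "Pd = (\<lambda>k e. \<Sum>k0\<in>{k0. k0 < k \<and> k \<le> k0 + dH e k0}. c k0 (fst e) e)"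
  define Pi where "Pi = (\<lambda>k e. \<Sum>k0\<in>{k0. k0 < k \<and> k \<le> k0 + dT e k0}. c k0 (snd e) e)"
  define DH where "DH = (\<lambda>k e. delivered (\<lambda>k0. c k0 (fst e) e) (dH e) k)"
  define DT where "DT = (\<lambda>k e. delivered (\<lambda>k0. c k0 (snd e) e) (dT e) k)"
  have Pd_np: "Pd k e \<le> 0" if "e \<in> E" for k e
    unfolding Pd_def by (rule sum_nonpos) (use ch_np[OF that] in auto)
  have Pi_nn: "0 \<le> Pi k e" if "e \<in> E" for k e
    unfolding Pi_def by (rule sum_nonneg) (use ct_nn[OF that] in auto)
  have DH_np: "DH k e \<le> 0" if "e \<in> E" for k e
    unfolding DH_def delivered_def by (rule sum_nonpos) (use ch_np[OF that] in auto)
  have DT_nn: "0 \<le> DT k e" if "e \<in> E" for k e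
    unfolding DT_def delivered_def by (rule sum_nonneg) (use ct_nn[OF that] in auto)
  have pendH: "Pd (Suc k) e + DH k e = Pd k e + c k (fst e) e" for k e
    unfolding Pd_def DH_def by (rule pend_step)
  have pendT: "Pi (Suc k) e + DT k e = Pi k e + c k (snd e) e" for k e
    unfolding Pi_def DT_def by (rule pend_step)
  have Pd0: "Pd 0 e = 0" for e unfolding Pd_def by simp
  have Pi0: "Pi 0 e = 0" for e unfolding Pi_def by simp
  define INV where "INV = (\<lambda>k e. ceiling (l e) \<le> fp k e \<and> f k e \<le> max (ceiling (l e)) (floor (u e))
      \<and> f k e + Pd k e = fp k e + Pi k e)"
  have stepE: "f (Suc k) e = f k e + c k (snd e) e + DH k e \<and> fp (Suc k) e = fp k e + c k (fst e) e + DT k e"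
    if e: "e \<in> E" and I: "INV k e" for k e
  proof -
    have I1: "ceiling (l e) \<le> fp k e" and I2: "f k e \<le> max (ceiling (l e)) (floor (u e))"
      and I3: "f k e + Pd k e = fp k e + Pi k e" using I unfolding INV_def by auto
    have a: "c k (snd e) e = 0 \<or> f k e + c k (snd e) e \<le> floor (u e)"
      using AP[OF conjunct2[OF sideV[OF e]], of k] by blast
    have "snd e \<noteq> fst e" using noloop e by (cases e) auto
    then have h: "c k (fst e) e = 0 \<or> ceiling (l e) \<le> fp k e + c k (fst e) e"
      using AP[OF conjunct1[OF sideV[OF e]], of k] by blast
    have x1: "f k e + c k (snd e) e \<le> max (ceiling (l e)) (floor (u e))" using a I2 by auto
    have x2: "ceiling (l e) \<le> fp k e + c k (fst e) e" using h I1 by auto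
    note facts = pendH[of k e] pendT[of k e] Pd_np[OF e, of k] Pd_np[OF e, of "Suc k"]
      Pi_nn[OF e, of k] Pi_nn[OF e, of "Suc k"] DH_np[OF e, of k] DT_nn[OF e, of k]
      ct_nn[OF e, of k] ch_np[OF e, of k] I3 x1 x2
    have "proj (l e) (u e) (f k e + c k (snd e) e + DH k e) = f k e + c k (snd e) e + DH k e"
      by (rule proj_id) (use facts in linarith)+
    moreover have "proj (l e) (u e) (fp k e + c k (fst e) e + DT k e) = fp k e + c k (fst e) e + DT k e"
      by (rule proj_id) (use facts in linarith)+
    ultimately show ?thesis using step_f e step_fp unfolding DH_def DT_def by auto
  qed
  have INVall: "\<forall>e\<in>E. INV k e" for k
  proof (induction k)
    case 0 then show ?case using init bounds unfolding INV_def Pd0 Pi0 by auto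
  next
    case (Suc k)
    show ?case
    proof
      fix e assume e: "e \<in> E"
      have I: "INV k e" using Suc e by blast
      note st = stepE[OF e I]
      note facts = pendH[of k e] pendT[of k e] Pd_np[OF e, of k] Pd_np[OF e, of "Suc k"]
        Pi_nn[OF e, of k] Pi_nn[OF e, of "Suc k"] DH_np[OF e, of k] DT_nn[OF e, of k]
        ct_nn[OF e, of k] ch_np[OF e, of k]
      have a: "c k (snd e) e = 0 \<or> f k e + c k (snd e) e \<le> floor (u e)"
        using AP[OF conjunct2[OF sideV[OF e]], of k] by blast
      have "snd e \<noteq> fst e" using noloop e by (cases e) auto
      then have h: "c k (fst e) e = 0 \<or> ceiling (l e) \<le> fp k e + c k (fst e) e"
        using AP[OF conjunct1[OF sideV[OF e]], of k] by blast
      have I1: "ceiling (l e) \<le> fp k e" and I2: "f k e \<le> max (ceiling (l e)) (floor (u e))"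
        and I3: "f k e + Pd k e = fp k e + Pi k e" using I unfolding INV_def by auto
      have x1: "f k e + c k (snd e) e \<le> max (ceiling (l e)) (floor (u e))" using a I2 by auto
      have x2: "ceiling (l e) \<le> fp k e + c k (fst e) e" using h I1 by auto
      show "INV (Suc k) e" unfolding INV_def st[THEN conjunct1] st[THEN conjunct2] using facts I3 x1 x2 by linarith
    qed
  qed
  have stepF: "f (Suc k) e = f k e + c k (snd e) e + DH k e" if "e \<in> E" for k e
    using stepE[OF that] INVall that by blast
  have fpf: "fp k e = f k e + Pd k e - Pi k e" if "e \<in> E" for k e
    using INVall that unfolding INV_def by auto
  show ?thesis
  proof (intro allI subsetI)
    fix k j assume jin: "j \<in> {j \<in> V. balance E (f (Suc k)) j < 0}"
    then have j: "j \<in> V" by simp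
    define In where "In = {e\<in>E. fst e = j}"
    define Out where "Out = {e\<in>E. snd e = j}"
    have finIn: "finite In" and finOut: "finite Out" using finE unfolding In_def Out_def by auto
    have disj: "In \<inter> Out = {}" using noloop unfolding In_def Out_def by auto
    have union: "In \<union> Out = set (ord j)" using ord_ok j unfolding In_def Out_def by auto
    define B where "B = (\<lambda>k. balance E (f k) j + (\<Sum>e\<in>In. Pd k e))"
    have bal: "balance E (f k) j = (\<Sum>e\<in>In. f k e) - (\<Sum>e\<in>Out. f k e)" for k
      unfolding balance_def In_def Out_def ..
    have sPd: "(\<Sum>e\<in>In. Pd k e) \<le> 0" for k
      by (rule sum_nonpos) (use Pd_np In_def in auto)
    have pbB: "pbalance E (f k) (fp k) j \<le> B k" for k
    proof -
      have "(\<Sum>e\<in>In. fp k e) = (\<Sum>e\<in>In. f k e + Pd k e - Pi k e)"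
        by (rule sum.cong) (use fpf In_def in auto)
      also have "\<dots> \<le> (\<Sum>e\<in>In. f k e + Pd k e)"
        by (rule sum_mono) (use Pi_nn In_def in auto)
      also have "\<dots> = (\<Sum>e\<in>In. f k e) + (\<Sum>e\<in>In. Pd k e)" by (rule sum.distrib)
      finally show ?thesis unfolding pbalance_def B_def bal In_def[symmetric] Out_def[symmetric]
        by linarith
    qed
    have Bstep: "B k - (\<Sum>e\<in>set (ord j). \<bar>c k j e\<bar>) \<le> B (Suc k)" for k
    proof -
      have "(\<Sum>e\<in>In. f k e + Pd k e - \<bar>c k j e\<bar>) \<le> (\<Sum>e\<in>In. f (Suc k) e + Pd (Suc k) e)"
      proof (rule sum_mono)
        fix e assume "e \<in> In"
        then have e: "e \<in> E" and fe: "fst e = j" unfolding In_def by auto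
        show "f k e + Pd k e - \<bar>c k j e\<bar> \<le> f (Suc k) e + Pd (Suc k) e"
          using stepF[OF e, of k] pendH[of k e] ct_nn[OF e, of k] fe by auto
      qed
      moreover have "(\<Sum>e\<in>Out. f (Suc k) e) \<le> (\<Sum>e\<in>Out. f k e + \<bar>c k j e\<bar>)"
      proof (rule sum_mono)
        fix e assume "e \<in> Out"
        then have e: "e \<in> E" and se: "snd e = j" unfolding Out_def by auto
        show "f (Suc k) e \<le> f k e + \<bar>c k j e\<bar>"
          using stepF[OF e, of k] DH_np[OF e, of k] se by auto
      qed
      moreover have "(\<Sum>e\<in>set (ord j). \<bar>c k j e\<bar>) = (\<Sum>e\<in>In. \<bar>c k j e\<bar>) + (\<Sum>e\<in>Out. \<bar>c k j e\<bar>)"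
        unfolding union[symmetric] by (rule sum.union_disjoint[OF finIn finOut disj])
      ultimately show ?thesis unfolding B_def bal sum.distrib sum_subtractf by linarith
    qed
    have Bmono: "0 \<le> B k \<Longrightarrow> 0 \<le> B (Suc k)" for k
      using Bstep[of k] pbB[of k] AP[OF j, of k] by linarith
    have inv2: "B k < 0 \<longrightarrow> (\<forall>e\<in>In. Pd k e = 0)" for k
    proof (induction k)
      case 0 then show ?case by (simp add: Pd0)
    next
      case (Suc k)
      show ?case
      proof
        assume neg: "B (Suc k) < 0"
        then have nk: "B k < 0" using Bmono[of k] by linarith
        then have z: "\<forall>e\<in>In. Pd k e = 0" using Suc by blast
        have "(\<Sum>e\<in>set (ord j). \<bar>c k j e\<bar>) \<le> 0"
          using AP[OF j, of k] pbB[of k] nk by linarith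
        then have "(\<Sum>e\<in>set (ord j). \<bar>c k j e\<bar>) = 0"
          using sum_nonneg[of "set (ord j)" "\<lambda>e. \<bar>c k j e\<bar>"] by fastforce
        then have cz: "\<forall>e\<in>set (ord j). c k j e = 0"
          using sum_nonneg_eq_0_iff[of "set (ord j)" "\<lambda>e. \<bar>c k j e\<bar>"] by auto
        show "\<forall>e\<in>In. Pd (Suc k) e = 0"
        proof
          fix e assume eI: "e \<in> In"
          then have e: "e \<in> E" and fe: "fst e = j" unfolding In_def by auto
          have "c k (fst e) e = 0" using cz eI union fe by auto
          then show "Pd (Suc k) e = 0"
            using pendH[of k e] z eI Pd_np[OF e, of "Suc k"] DH_np[OF e, of k] by auto
        qed
      qed
    qed
    have "\<not> 0 \<le> balance E (f k) j"
    proof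
      assume b0: "0 \<le> balance E (f k) j"
      have "0 \<le> B k"
      proof (rule ccontr)
        assume "\<not> 0 \<le> B k"
        then have "\<forall>e\<in>In. Pd k e = 0" using inv2 by auto
        then have "B k = balance E (f k) j" unfolding B_def by simp
        then show False using b0 \<open>\<not> 0 \<le> B k\<close> by simp
      qed
      then have "0 \<le> B (Suc k)" by (rule Bmono)
      then have "0 \<le> balance E (f (Suc k)) j" unfolding B_def using sPd[of "Suc k"] by linarith
      then show False using jin by simp
    qed
    then show "j \<in> {j \<in> V. balance E (f k) j < 0}" using j by simp
  qed
qed


end
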